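(* Let $\mathcal{T}$ be a triangulated category, let $X$ and $Y$ be indecomposable objects of $\mathcal{T}$, and let $u:X\to Y$ be an irreducible morphism. Then the mapping cone $C_u$ (the third object of a distinguished triangle $X\xrightarrow{u}Y\to C_u\to X[1]$) is indecomposable.
   Context: A morphism is irreducible if it is neither a split monomorphism nor a split epimorphism, and whenever it factors as $hg$, either $g$ is a split monomorphism or $h$ is a split epimorphism. *)

theory Defs
  imports Main
begin

text \<open>A (small-or-large) category presented by a set of objects, hom-sets, composition
  (cmp g f = g after f) and identities; together with the preadditive structure,
  a shift automorphism and a class of distinguished triangles (X,u,Y,v,Z,w)
  meaning X --u--> Y --v--> Z --w--> X[1].\<close>

record ('o, 'm) tricat =
  Obj  :: "'o set"
  hom  :: "'o \<Rightarrow> 'o \<Rightarrow> 'm set"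
  cmp  :: "'m \<Rightarrow> 'm \<Rightarrow> 'm"
  idm  :: "'o \<Rightarrow> 'm"
  add  :: "'m \<Rightarrow> 'm \<Rightarrow> 'm"
  neg  :: "'m \<Rightarrow> 'm"
  zer  :: "'o \<Rightarrow> 'o \<Rightarrow> 'm"
  shO  :: "'o \<Rightarrow> 'o"
  shM  :: "'m \<Rightarrow> 'm"
  dist :: "('o \<times> 'm \<times> 'o \<times> 'm \<times> 'o \<times> 'm) set"

definition category :: "('o, 'm, 'x) tricat_scheme \<Rightarrow> bool" where
  "category T \<longleftrightarrow>
     (\<forall>X Y f. f \<in> hom T X Y \<longrightarrow> X \<in> Obj T \<and> Y \<in> Obj T)
   \<and> (\<forall>X Y X' Y' f. f \<in> hom T X Y \<longrightarrow> f \<in> hom T X' Y' \<longrightarrow> X = X' \<and> Y = Y')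
   \<and> (\<forall>X Y Z f g. f \<in> hom T X Y \<longrightarrow> g \<in> hom T Y Z \<longrightarrow> cmp T g f \<in> hom T X Z)
   \<and> (\<forall>W X Y Z f g h. f \<in> hom T W X \<longrightarrow> g \<in> hom T X Y \<longrightarrow> h \<in> hom T Y Z \<longrightarrow>
        cmp T h (cmp T g f) = cmp T (cmp T h g) f)
   \<and> (\<forall>X \<in> Obj T. idm T X \<in> hom T X X)
   \<and> (\<forall>X Y f. f \<in> hom T X Y \<longrightarrow> cmp T f (idm T X) = f \<and> cmp T (idm T Y) f = f)"

definition preadditive :: "('o, 'm, 'x) tricat_scheme \<Rightarrow> bool" where
  "preadditive T \<longleftrightarrow> category T
   \<and> (\<forall>X \<in> Obj T. \<forall>Y \<in> Obj T.
        zer T X Y \<in> hom T X Y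
      \<and> (\<forall>f \<in> hom T X Y. \<forall>g \<in> hom T X Y. add T f g \<in> hom T X Y)
      \<and> (\<forall>f \<in> hom T X Y. neg T f \<in> hom T X Y)
      \<and> (\<forall>f \<in> hom T X Y. \<forall>g \<in> hom T X Y. \<forall>h \<in> hom T X Y.
            add T (add T f g) h = add T f (add T g h))
      \<and> (\<forall>f \<in> hom T X Y. \<forall>g \<in> hom T X Y. add T f g = add T g f)
      \<and> (\<forall>f \<in> hom T X Y. add T f (zer T X Y) = f)
      \<and> (\<forall>f \<in> hom T X Y. add T f (neg T f) = zer T X Y))
   \<and> (\<forall>X Y Z f g g'. f \<in> hom T X Y \<longrightarrow> g \<in> hom T Y Z \<longrightarrow> g' \<in> hom T Y Z \<longrightarrow>
        cmp T (add T g g') f = add T (cmp T g f) (cmp T g' f))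
   \<and> (\<forall>X Y Z f f' g. f \<in> hom T X Y \<longrightarrow> f' \<in> hom T X Y \<longrightarrow> g \<in> hom T Y Z \<longrightarrow>
        cmp T g (add T f f') = add T (cmp T g f) (cmp T g f'))"

definition zero_object :: "('o, 'm, 'x) tricat_scheme \<Rightarrow> 'o \<Rightarrow> bool" where
  "zero_object T Z \<longleftrightarrow> Z \<in> Obj T \<and>
     (\<forall>X \<in> Obj T. (\<exists>!f. f \<in> hom T Z X) \<and> (\<exists>!f. f \<in> hom T X Z))"

definition biproduct :: "('o, 'm, 'x) tricat_scheme \<Rightarrow> 'o \<Rightarrow> 'o \<Rightarrow> 'o \<Rightarrow>
    'm \<Rightarrow> 'm \<Rightarrow> 'm \<Rightarrow> 'm \<Rightarrow> bool" where
  "biproduct T A B P i1 i2 p1 p2 \<longleftrightarrow>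
     i1 \<in> hom T A P \<and> i2 \<in> hom T B P \<and> p1 \<in> hom T P A \<and> p2 \<in> hom T P B
   \<and> cmp T p1 i1 = idm T A \<and> cmp T p2 i2 = idm T B
   \<and> cmp T p1 i2 = zer T B A \<and> cmp T p2 i1 = zer T A B
   \<and> add T (cmp T i1 p1) (cmp T i2 p2) = idm T P"

definition additive :: "('o, 'm, 'x) tricat_scheme \<Rightarrow> bool" where
  "additive T \<longleftrightarrow> preadditive T \<and> (\<exists>Z. zero_object T Z)
   \<and> (\<forall>A \<in> Obj T. \<forall>B \<in> Obj T. \<exists>P i1 i2 p1 p2. biproduct T A B P i1 i2 p1 p2)"

definition iso :: "('o, 'm, 'x) tricat_scheme \<Rightarrow> 'o \<Rightarrow> 'o \<Rightarrow> 'm \<Rightarrow> bool" where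
  "iso T X Y f \<longleftrightarrow> f \<in> hom T X Y \<and>
     (\<exists>g \<in> hom T Y X. cmp T g f = idm T X \<and> cmp T f g = idm T Y)"

definition shift_automorphism :: "('o, 'm, 'x) tricat_scheme \<Rightarrow> bool" where
  "shift_automorphism T \<longleftrightarrow>
     bij_betw (shO T) (Obj T) (Obj T)
   \<and> (\<forall>X \<in> Obj T. \<forall>Y \<in> Obj T. bij_betw (shM T) (hom T X Y) (hom T (shO T X) (shO T Y)))
   \<and> (\<forall>X Y Z f g. f \<in> hom T X Y \<longrightarrow> g \<in> hom T Y Z \<longrightarrow>
        shM T (cmp T g f) = cmp T (shM T g) (shM T f))
   \<and> (\<forall>X \<in> Obj T. shM T (idm T X) = idm T (shO T X))
   \<and> (\<forall>X Y f g. f \<in> hom T X Y \<longrightarrow> g \<in> hom T X Y \<longrightarrow>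
        shM T (add T f g) = add T (shM T f) (shM T g))"

definition triangle :: "('o, 'm, 'x) tricat_scheme \<Rightarrow> 'o \<Rightarrow> 'm \<Rightarrow> 'o \<Rightarrow> 'm \<Rightarrow> 'o \<Rightarrow> 'm \<Rightarrow> bool" where
  "triangle T X u Y v Z w \<longleftrightarrow> u \<in> hom T X Y \<and> v \<in> hom T Y Z \<and> w \<in> hom T Z (shO T X)"

definition tri_morphism :: "('o, 'm, 'x) tricat_scheme \<Rightarrow>
    'o \<Rightarrow> 'm \<Rightarrow> 'o \<Rightarrow> 'm \<Rightarrow> 'o \<Rightarrow> 'm \<Rightarrow>
    'o \<Rightarrow> 'm \<Rightarrow> 'o \<Rightarrow> 'm \<Rightarrow> 'o \<Rightarrow> 'm \<Rightarrow> 'm \<Rightarrow> 'm \<Rightarrow> 'm \<Rightarrow> bool" where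
  "tri_morphism T X u Y v Z w X' u' Y' v' Z' w' a b c \<longleftrightarrow>
     a \<in> hom T X X' \<and> b \<in> hom T Y Y' \<and> c \<in> hom T Z Z'
   \<and> cmp T b u = cmp T u' a \<and> cmp T c v = cmp T v' b
   \<and> cmp T (shM T a) w = cmp T w' c"

definition triangulated :: "('o, 'm, 'x) tricat_scheme \<Rightarrow> bool" where
  "triangulated T \<longleftrightarrow> additive T \<and> shift_automorphism T
   \<and> (\<forall>X u Y v Z w. (X, u, Y, v, Z, w) \<in> dist T \<longrightarrow> triangle T X u Y v Z w)
   \<comment> \<open>TR1: closed under isomorphism of triangles\<close>
   \<and> (\<forall>X u Y v Z w X' u' Y' v' Z' w' a b c.
        (X, u, Y, v, Z, w) \<in> dist T \<longrightarrow> triangle T X' u' Y' v' Z' w' \<longrightarrow>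
        tri_morphism T X u Y v Z w X' u' Y' v' Z' w' a b c \<longrightarrow>
        iso T X X' a \<longrightarrow> iso T Y Y' b \<longrightarrow> iso T Z Z' c \<longrightarrow>
        (X', u', Y', v', Z', w') \<in> dist T)
   \<comment> \<open>TR1: X --id--> X --> 0 --> X[1] is distinguished\<close>
   \<and> (\<forall>X \<in> Obj T. \<forall>Z. zero_object T Z \<longrightarrow>
        (X, idm T X, X, zer T X Z, Z, zer T Z (shO T X)) \<in> dist T)
   \<comment> \<open>TR1: every morphism extends to a distinguished triangle\<close>
   \<and> (\<forall>X Y u. u \<in> hom T X Y \<longrightarrow> (\<exists>v Z w. (X, u, Y, v, Z, w) \<in> dist T))
   \<comment> \<open>TR2: rotation\<close>
   \<and> (\<forall>X u Y v Z w. (X, u, Y, v, Z, w) \<in> dist T \<longleftrightarrow>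
        (Y, v, Z, w, shO T X, neg T (shM T u)) \<in> dist T)
   \<comment> \<open>TR3: completion of morphisms\<close>
   \<and> (\<forall>X u Y v Z w X' u' Y' v' Z' w' a b.
        (X, u, Y, v, Z, w) \<in> dist T \<longrightarrow> (X', u', Y', v', Z', w') \<in> dist T \<longrightarrow>
        a \<in> hom T X X' \<longrightarrow> b \<in> hom T Y Y' \<longrightarrow> cmp T b u = cmp T u' a \<longrightarrow>
        (\<exists>c \<in> hom T Z Z'. cmp T c v = cmp T v' b \<and> cmp T (shM T a) w = cmp T w' c))
   \<comment> \<open>TR4: octahedral axiom\<close>
   \<and> (\<forall>X Y Z u v Z' j k X' l i Y' m n.
        u \<in> hom T X Y \<longrightarrow> v \<in> hom T Y Z \<longrightarrow>
        (X, u, Y, j, Z', k) \<in> dist T \<longrightarrow>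
        (Y, v, Z, l, X', i) \<in> dist T \<longrightarrow>
        (X, cmp T v u, Z, m, Y', n) \<in> dist T \<longrightarrow>
        (\<exists>f g. f \<in> hom T Z' Y' \<and> g \<in> hom T Y' X'
           \<and> (Z', f, Y', g, X', cmp T (shM T j) i) \<in> dist T
           \<and> cmp T f j = cmp T m v \<and> cmp T n f = k
           \<and> cmp T g m = l \<and> cmp T i g = cmp T (shM T u) n))"

definition split_mono :: "('o, 'm, 'x) tricat_scheme \<Rightarrow> 'o \<Rightarrow> 'o \<Rightarrow> 'm \<Rightarrow> bool" where
  "split_mono T X Y f \<longleftrightarrow> f \<in> hom T X Y \<and> (\<exists>r \<in> hom T Y X. cmp T r f = idm T X)"

definition split_epi :: "('o, 'm, 'x) tricat_scheme \<Rightarrow> 'o \<Rightarrow> 'o \<Rightarrow> 'm \<Rightarrow> bool" where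
  "split_epi T X Y f \<longleftrightarrow> f \<in> hom T X Y \<and> (\<exists>s \<in> hom T Y X. cmp T f s = idm T Y)"

definition irreducible_mor :: "('o, 'm, 'x) tricat_scheme \<Rightarrow> 'o \<Rightarrow> 'o \<Rightarrow> 'm \<Rightarrow> bool" where
  "irreducible_mor T X Y f \<longleftrightarrow> f \<in> hom T X Y
   \<and> \<not> split_mono T X Y f \<and> \<not> split_epi T X Y f
   \<and> (\<forall>Z g h. g \<in> hom T X Z \<longrightarrow> h \<in> hom T Z Y \<longrightarrow> f = cmp T h g \<longrightarrow>
        split_mono T X Z g \<or> split_epi T Z Y h)"

definition indecomposable :: "('o, 'm, 'x) tricat_scheme \<Rightarrow> 'o \<Rightarrow> bool" where
  "indecomposable T X \<longleftrightarrow> X \<in> Obj T \<and> \<not> zero_object T X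
   \<and> (\<forall>A B i1 i2 p1 p2. biproduct T A B X i1 i2 p1 p2 \<longrightarrow>
        zero_object T A \<or> zero_object T B)"

end

theory Submission
  imports Defs
begin

locale TC =
  fixes T :: "('o, 'm) tricat"
  assumes tri: "triangulated T"
begin

lemma addv: "additive T" by (rule conjunct1[OF tri[unfolded triangulated_def]])
lemma pre: "preadditive T" by (rule conjunct1[OF addv[unfolded additive_def]])
lemma cat: "category T" by (rule conjunct1[OF pre[unfolded preadditive_def]])
lemmas C = cat[unfolded category_def]

lemma homO1: "f \<in> hom T X Y \<Longrightarrow> X \<in> Obj T" using conjunct1[OF C] by blast
lemma homO2: "f \<in> hom T X Y \<Longrightarrow> Y \<in> Obj T" using conjunct1[OF C] by blast
lemma cmp_hom: "f \<in> hom T X Y \<Longrightarrow> g \<in> hom T Y Z \<Longrightarrow> cmp T g f \<in> hom T X Z"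
  using conjunct1[OF conjunct2[OF conjunct2[OF C]]] by blast
lemma assoc: "f \<in> hom T W X \<Longrightarrow> g \<in> hom T X Y \<Longrightarrow> h \<in> hom T Y Z \<Longrightarrow>
        cmp T h (cmp T g f) = cmp T (cmp T h g) f"
  using conjunct1[OF conjunct2[OF conjunct2[OF conjunct2[OF C]]]] by blast
lemma id_hom: "X \<in> Obj T \<Longrightarrow> idm T X \<in> hom T X X"
  using conjunct1[OF conjunct2[OF conjunct2[OF conjunct2[OF conjunct2[OF C]]]]] by blast
lemma id_r: "f \<in> hom T X Y \<Longrightarrow> cmp T f (idm T X) = f"
  using conjunct2[OF conjunct2[OF conjunct2[OF conjunct2[OF conjunct2[OF C]]]]] by blast
lemma id_l: "f \<in> hom T X Y \<Longrightarrow> cmp T (idm T Y) f = f"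
  using conjunct2[OF conjunct2[OF conjunct2[OF conjunct2[OF conjunct2[OF C]]]]] by blast

lemma P1: "\<forall>X \<in> Obj T. \<forall>Y \<in> Obj T.
        zer T X Y \<in> hom T X Y
      \<and> (\<forall>f \<in> hom T X Y. \<forall>g \<in> hom T X Y. add T f g \<in> hom T X Y)
      \<and> (\<forall>f \<in> hom T X Y. neg T f \<in> hom T X Y)
      \<and> (\<forall>f \<in> hom T X Y. \<forall>g \<in> hom T X Y. \<forall>h \<in> hom T X Y.
            add T (add T f g) h = add T f (add T g h))
      \<and> (\<forall>f \<in> hom T X Y. \<forall>g \<in> hom T X Y. add T f g = add T g f)
      \<and> (\<forall>f \<in> hom T X Y. add T f (zer T X Y) = f)
      \<and> (\<forall>f \<in> hom T X Y. add T f (neg T f) = zer T X Y)"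
  by (rule conjunct1[OF conjunct2[OF pre[unfolded preadditive_def]]])

lemma P1i: assumes "X \<in> Obj T" "Y \<in> Obj T" shows
  "zer T X Y \<in> hom T X Y
      \<and> (\<forall>f \<in> hom T X Y. \<forall>g \<in> hom T X Y. add T f g \<in> hom T X Y)
      \<and> (\<forall>f \<in> hom T X Y. neg T f \<in> hom T X Y)
      \<and> (\<forall>f \<in> hom T X Y. \<forall>g \<in> hom T X Y. \<forall>h \<in> hom T X Y.
            add T (add T f g) h = add T f (add T g h))
      \<and> (\<forall>f \<in> hom T X Y. \<forall>g \<in> hom T X Y. add T f g = add T g f)
      \<and> (\<forall>f \<in> hom T X Y. add T f (zer T X Y) = f)
      \<and> (\<forall>f \<in> hom T X Y. add T f (neg T f) = zer T X Y)"
  by (rule bspec[OF bspec[OF P1 assms(1)] assms(2)])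

lemma zer_hom: "X \<in> Obj T \<Longrightarrow> Y \<in> Obj T \<Longrightarrow> zer T X Y \<in> hom T X Y"
  using P1i by blast
lemma add_hom: assumes "f \<in> hom T X Y" "g \<in> hom T X Y" shows "add T f g \<in> hom T X Y"
  using P1i[OF homO1[OF assms(1)] homO2[OF assms(1)]] assms by blast
lemma neg_hom: assumes "f \<in> hom T X Y" shows "neg T f \<in> hom T X Y"
  using P1i[OF homO1[OF assms(1)] homO2[OF assms(1)]] assms by blast
lemma add_assoc: assumes "f \<in> hom T X Y" "g \<in> hom T X Y" "h \<in> hom T X Y" shows
            "add T (add T f g) h = add T f (add T g h)"
  using P1i[OF homO1[OF assms(1)] homO2[OF assms(1)]] assms by blast
lemma add_comm: assumes "f \<in> hom T X Y" "g \<in> hom T X Y" shows "add T f g = add T g f"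
  using P1i[OF homO1[OF assms(1)] homO2[OF assms(1)]] assms by blast
lemma add_0: assumes "f \<in> hom T X Y" shows "add T f (zer T X Y) = f"
  using P1i[OF homO1[OF assms(1)] homO2[OF assms(1)]] assms by blast
lemma add_neg: assumes "f \<in> hom T X Y" shows "add T f (neg T f) = zer T X Y"
  using P1i[OF homO1[OF assms(1)] homO2[OF assms(1)]] assms by blast
lemma distl: "f \<in> hom T X Y \<Longrightarrow> g \<in> hom T Y Z \<Longrightarrow> g' \<in> hom T Y Z \<Longrightarrow>
        cmp T (add T g g') f = add T (cmp T g f) (cmp T g' f)"
  using conjunct1[OF conjunct2[OF conjunct2[OF pre[unfolded preadditive_def]]]] by blast
lemma distr: "f \<in> hom T X Y \<Longrightarrow> f' \<in> hom T X Y \<Longrightarrow> g \<in> hom T Y Z \<Longrightarrow>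
        cmp T g (add T f f') = add T (cmp T g f) (cmp T g f')"
  using conjunct2[OF conjunct2[OF conjunct2[OF pre[unfolded preadditive_def]]]] by blast

lemma add_0l: assumes "f \<in> hom T X Y" shows "add T (zer T X Y) f = f"
  using add_0[OF assms] add_comm[OF assms zer_hom[OF homO1[OF assms] homO2[OF assms]]] by simp

lemma idem_zero: assumes "x \<in> hom T X Y" "add T x x = x" shows "x = zer T X Y"
proof -
  have "zer T X Y = add T x (neg T x)" using add_neg assms by simp
  also have "\<dots> = add T (add T x x) (neg T x)" using assms by simp
  also have "\<dots> = add T x (add T x (neg T x))" using add_assoc assms neg_hom by blast
  also have "\<dots> = x" using add_neg add_0 assms by simp
  finally show ?thesis by simp
qed

lemma zer_cmp: assumes f: "f \<in> hom T X Y" and Z: "Z \<in> Obj T" shows "cmp T (zer T Y Z) f = zer T X Z"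
proof -
  have Y: "Y \<in> Obj T" using homO2 f .
  have z: "zer T Y Z \<in> hom T Y Z" using zer_hom Y Z .
  have "cmp T (zer T Y Z) f = cmp T (add T (zer T Y Z) (zer T Y Z)) f" using add_0[OF z] by simp
  also have "\<dots> = add T (cmp T (zer T Y Z) f) (cmp T (zer T Y Z) f)" using distl[OF f z z] .
  finally show ?thesis using idem_zero cmp_hom[OF f z] by simp
qed
lemma cmp_zer: assumes g: "g \<in> hom T Y Z" and X: "X \<in> Obj T" shows "cmp T g (zer T X Y) = zer T X Z"
proof -
  have Y: "Y \<in> Obj T" using homO1 g .
  have z: "zer T X Y \<in> hom T X Y" using zer_hom X Y .
  have "cmp T g (zer T X Y) = cmp T g (add T (zer T X Y) (zer T X Y))" using add_0[OF z] by simp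
  also have "\<dots> = add T (cmp T g (zer T X Y)) (cmp T g (zer T X Y))" using distr[OF z z g] .
  finally show ?thesis using idem_zero cmp_hom[OF z g] by simp
qed

lemma inv_unique: assumes "a \<in> hom T X Y" "b \<in> hom T X Y" "add T a b = zer T X Y"
  shows "b = neg T a"
proof -
  have "neg T a = add T (neg T a) (add T a b)" using assms add_0 neg_hom by simp
  also have "\<dots> = add T (add T (neg T a) a) b" using add_assoc[OF neg_hom[OF assms(1)] assms(1,2)] by simp
  also have "\<dots> = b" using add_comm[OF neg_hom[OF assms(1)] assms(1)] add_neg[OF assms(1)] add_0l[OF assms(2)] by simp
  finally show ?thesis by simp
qed

lemma neg_neg: assumes a: "a \<in> hom T X Y" shows "neg T (neg T a) = a"
proof -
  have "add T (neg T a) a = zer T X Y" using add_comm[OF neg_hom[OF a] a] add_neg[OF a] by simp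
  then show ?thesis using inv_unique[OF neg_hom[OF a] a] by simp
qed

lemma neg_inj: "a \<in> hom T X Y \<Longrightarrow> b \<in> hom T X Y \<Longrightarrow> neg T a = neg T b \<Longrightarrow> a = b"
  by (metis neg_neg)

lemma cmp_neg: assumes "f \<in> hom T X Y" "g \<in> hom T Y Z"
  shows "cmp T g (neg T f) = neg T (cmp T g f)"
proof -
  have "add T (cmp T g f) (cmp T g (neg T f)) = zer T X Z"
    using distr[OF assms(1) neg_hom[OF assms(1)] assms(2)] add_neg[OF assms(1)]
      cmp_zer[OF assms(2)] homO1[OF assms(1)] by simp
  then show ?thesis using inv_unique[OF cmp_hom[OF assms(1,2)]] cmp_hom[OF neg_hom[OF assms(1)] assms(2)] cmp_hom[OF assms(1) neg_hom[OF assms(2)]] by blast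
qed

lemma neg_cmp: assumes "f \<in> hom T X Y" "g \<in> hom T Y Z"
  shows "cmp T (neg T g) f = neg T (cmp T g f)"
proof -
  have "add T (cmp T g f) (cmp T (neg T g) f) = zer T X Z"
    using distl[OF assms(1) assms(2) neg_hom[OF assms(2)]] add_neg[OF assms(2)]
      zer_cmp[OF assms(1)] homO2[OF assms(2)] by simp
  then show ?thesis using inv_unique[OF cmp_hom[OF assms(1,2)]] cmp_hom[OF neg_hom[OF assms(1)] assms(2)] cmp_hom[OF assms(1) neg_hom[OF assms(2)]] by blast
qed

lemma neg_zer: "X \<in> Obj T \<Longrightarrow> Y \<in> Obj T \<Longrightarrow> neg T (zer T X Y) = zer T X Y"
  using inv_unique[OF zer_hom zer_hom] add_0[OF zer_hom] by metis

end
context TC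
begin

lemma zo_ex: "\<exists>Z. zero_object T Z" using addv unfolding additive_def by blast
lemma zo_Obj: "zero_object T Z \<Longrightarrow> Z \<in> Obj T" unfolding zero_object_def by blast

lemma zo_from: assumes "zero_object T Z" "f \<in> hom T Z A" shows "f = zer T Z A"
proof -
  have A: "A \<in> Obj T" using homO2 assms(2) .
  have "zer T Z A \<in> hom T Z A" using zer_hom A zo_Obj assms(1) by blast
  then show ?thesis using assms A unfolding zero_object_def by blast
qed

lemma zo_to: assumes "zero_object T Z" "f \<in> hom T A Z" shows "f = zer T A Z"
proof -
  have A: "A \<in> Obj T" using homO1 assms(2) .
  have "zer T A Z \<in> hom T A Z" using zer_hom A zo_Obj assms(1) by blast
  then show ?thesis using assms A unfolding zero_object_def by blast
qed

lemma zo_retract: assumes z: "zero_object T Z" and g: "g \<in> hom T A Z" and r: "r \<in> hom T Z A"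
   and rg: "cmp T r g = idm T A"
  shows "zero_object T A"
  unfolding zero_object_def
proof (intro conjI ballI)
  show A: "A \<in> Obj T" using homO1 g .
  have Z: "Z \<in> Obj T" using zo_Obj z .
  fix B assume B: "B \<in> Obj T"
  show "\<exists>!f. f \<in> hom T A B"
  proof (rule ex_ex1I)
    show "\<exists>f. f \<in> hom T A B" using zer_hom A B by blast
  next
    have key: "f = cmp T (zer T Z B) g" if f: "f \<in> hom T A B" for f
    proof -
      have "f = cmp T f (cmp T r g)" using rg id_r[OF f] by simp
      also have "\<dots> = cmp T (cmp T f r) g" using assoc[OF g r f] .
      also have "cmp T f r = zer T Z B" using zo_from[OF z cmp_hom[OF r f]] .
      finally show ?thesis .
    qed
    fix f f' assume "f \<in> hom T A B" "f' \<in> hom T A B"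
    then show "f = f'" using key[of f] key[of f'] by simp
  qed
  show "\<exists>!f. f \<in> hom T B A"
  proof (rule ex_ex1I)
    show "\<exists>f. f \<in> hom T B A" using zer_hom A B by blast
  next
    have key: "f = cmp T r (zer T B Z)" if f: "f \<in> hom T B A" for f
    proof -
      have "f = cmp T (cmp T r g) f" using rg id_l[OF f] by simp
      also have "\<dots> = cmp T r (cmp T g f)" using assoc[OF f g r] by simp
      also have "cmp T g f = zer T B Z" using zo_to[OF z cmp_hom[OF f g]] .
      finally show ?thesis .
    qed
    fix f f' assume "f \<in> hom T B A" "f' \<in> hom T B A"
    then show "f = f'" using key[of f] key[of f'] by simp
  qed
qed

lemma zo_factor: assumes z: "zero_object T Z" and g: "g \<in> hom T A Z" and h: "h \<in> hom T Z B"
  shows "cmp T h g = zer T A B"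
  using zo_from[OF z h] zer_cmp[OF g homO2[OF h]] by simp

lemma sa: "shift_automorphism T" by (rule conjunct1[OF conjunct2[OF tri[unfolded triangulated_def]]])
lemmas S = sa[unfolded shift_automorphism_def]
lemma bO: "bij_betw (shO T) (Obj T) (Obj T)" by (rule conjunct1[OF S])
lemma bM: "X \<in> Obj T \<Longrightarrow> Y \<in> Obj T \<Longrightarrow> bij_betw (shM T) (hom T X Y) (hom T (shO T X) (shO T Y))"
  using conjunct1[OF conjunct2[OF S]] by blast
lemma shO_Obj: "X \<in> Obj T \<Longrightarrow> shO T X \<in> Obj T"
  using bO unfolding bij_betw_def by blast
lemma shO_surj: "Y \<in> Obj T \<Longrightarrow> \<exists>X\<in>Obj T. Y = shO T X"
  using bO unfolding bij_betw_def by blast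
lemma shM_hom: assumes "f \<in> hom T X Y" shows "shM T f \<in> hom T (shO T X) (shO T Y)"
  using bM[OF homO1[OF assms] homO2[OF assms]] assms unfolding bij_betw_def by blast
lemma shM_inj: assumes "f \<in> hom T X Y" "g \<in> hom T X Y" "shM T f = shM T g" shows "f = g"
  using bM[OF homO1[OF assms(1)] homO2[OF assms(1)]] assms unfolding bij_betw_def inj_on_def by blast
lemma shM_surj: "X \<in> Obj T \<Longrightarrow> Y \<in> Obj T \<Longrightarrow> h \<in> hom T (shO T X) (shO T Y) \<Longrightarrow> \<exists>f\<in>hom T X Y. h = shM T f"
  using bM unfolding bij_betw_def by blast
lemma shM_cmp: "f \<in> hom T X Y \<Longrightarrow> g \<in> hom T Y Z \<Longrightarrow> shM T (cmp T g f) = cmp T (shM T g) (shM T f)"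
  using conjunct1[OF conjunct2[OF conjunct2[OF S]]] by blast
lemma shM_id: "X \<in> Obj T \<Longrightarrow> shM T (idm T X) = idm T (shO T X)"
  using conjunct1[OF conjunct2[OF conjunct2[OF conjunct2[OF S]]]] by blast
lemma shM_add: "f \<in> hom T X Y \<Longrightarrow> g \<in> hom T X Y \<Longrightarrow> shM T (add T f g) = add T (shM T f) (shM T g)"
  using conjunct2[OF conjunct2[OF conjunct2[OF conjunct2[OF S]]]] by blast

lemma shM_zer: assumes "X \<in> Obj T" "Y \<in> Obj T" shows "shM T (zer T X Y) = zer T (shO T X) (shO T Y)"
proof -
  have z: "zer T X Y \<in> hom T X Y" using zer_hom assms by blast
  have "shM T (zer T X Y) = add T (shM T (zer T X Y)) (shM T (zer T X Y))"
    using shM_add[OF z z] add_0[OF z] by simp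
  then show ?thesis using idem_zero shM_hom z by metis
qed

lemma zero_shift: assumes X: "X \<in> Obj T" shows "zero_object T (shO T X) \<longleftrightarrow> zero_object T X"
proof
  assume z: "zero_object T (shO T X)"
  show "zero_object T X" unfolding zero_object_def
  proof (intro conjI ballI)
    show "X \<in> Obj T" by fact
    fix A assume A: "A \<in> Obj T"
    show "\<exists>!f. f \<in> hom T X A"
    proof (rule ex_ex1I)
      show "\<exists>f. f \<in> hom T X A" using zer_hom X A by blast
    next
      fix f g assume "f \<in> hom T X A" "g \<in> hom T X A"
      then show "f = g" using zo_from[OF z] shM_hom shM_inj by metis
    qed
    show "\<exists>!f. f \<in> hom T A X"
    proof (rule ex_ex1I)
      show "\<exists>f. f \<in> hom T A X" using zer_hom X A by blast
    next
      fix f g assume "f \<in> hom T A X" "g \<in> hom T A X"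
      then show "f = g" using zo_to[OF z] shM_hom shM_inj by metis
    qed
  qed
next
  assume z: "zero_object T X"
  show "zero_object T (shO T X)" unfolding zero_object_def
  proof (intro conjI ballI)
    show "shO T X \<in> Obj T" using shO_Obj X by blast
    fix A assume A: "A \<in> Obj T"
    then obtain A' where A': "A' \<in> Obj T" "A = shO T A'" using shO_surj by blast
    show "\<exists>!f. f \<in> hom T (shO T X) A"
    proof (rule ex_ex1I)
      show "\<exists>f. f \<in> hom T (shO T X) A" using zer_hom shO_Obj X A by blast
    next
      fix f g assume "f \<in> hom T (shO T X) A" "g \<in> hom T (shO T X) A"
      then show "f = g" using zo_from[OF z] shM_surj A' X by metis
    qed
    show "\<exists>!f. f \<in> hom T A (shO T X)"
    proof (rule ex_ex1I)
      show "\<exists>f. f \<in> hom T A (shO T X)" using zer_hom shO_Obj X A by blast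
    next
      fix f g assume "f \<in> hom T A (shO T X)" "g \<in> hom T A (shO T X)"
      then show "f = g" using zo_to[OF z] shM_surj A' X by metis
    qed
  qed
qed

end
context TC begin
lemma indec_shift: assumes ind: "indecomposable T X" shows "indecomposable T (shO T X)"
proof -
  have X: "X \<in> Obj T" and nz: "\<not> zero_object T X" using ind unfolding indecomposable_def by auto
  have SX: "shO T X \<in> Obj T" using shO_Obj X by blast
  have nz': "\<not> zero_object T (shO T X)" using zero_shift X nz by blast
  have "zero_object T A \<or> zero_object T B" if bp: "biproduct T A B (shO T X) i1 i2 p1 p2" for A B i1 i2 p1 p2
  proof -
    from bp have h: "i1 \<in> hom T A (shO T X)" "i2 \<in> hom T B (shO T X)" "p1 \<in> hom T (shO T X) A"
      "p2 \<in> hom T (shO T X) B" and e: "cmp T p1 i1 = idm T A" "cmp T p2 i2 = idm T B"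
      "cmp T p1 i2 = zer T B A" "cmp T p2 i1 = zer T A B"
      "add T (cmp T i1 p1) (cmp T i2 p2) = idm T (shO T X)"
      unfolding biproduct_def by auto
    obtain A' where A': "A' \<in> Obj T" "A = shO T A'" using shO_surj homO1 h(1) by blast
    obtain B' where B': "B' \<in> Obj T" "B = shO T B'" using shO_surj homO1 h(2) by blast
    obtain j1 where j1: "j1 \<in> hom T A' X" "i1 = shM T j1" using shM_surj[OF A'(1) X] h(1) A'(2) by blast
    obtain j2 where j2: "j2 \<in> hom T B' X" "i2 = shM T j2" using shM_surj[OF B'(1) X] h(2) B'(2) by blast
    obtain q1 where q1: "q1 \<in> hom T X A'" "p1 = shM T q1" using shM_surj[OF X A'(1)] h(3) A'(2) by blast
    obtain q2 where q2: "q2 \<in> hom T X B'" "p2 = shM T q2" using shM_surj[OF X B'(1)] h(4) B'(2) by blast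
    have "biproduct T A' B' X j1 j2 q1 q2" unfolding biproduct_def
    proof (intro conjI)
      have "shM T (cmp T q1 j1) = shM T (idm T A')"
        using shM_cmp[OF j1(1) q1(1)] j1(2) q1(2) e(1) shM_id[OF A'(1)] A'(2) by simp
      then show "cmp T q1 j1 = idm T A'" using shM_inj[OF cmp_hom[OF j1(1) q1(1)] id_hom[OF A'(1)]] by simp
      have "shM T (cmp T q2 j2) = shM T (idm T B')"
        using shM_cmp[OF j2(1) q2(1)] j2(2) q2(2) e(2) shM_id[OF B'(1)] B'(2) by simp
      then show "cmp T q2 j2 = idm T B'" using shM_inj[OF cmp_hom[OF j2(1) q2(1)] id_hom[OF B'(1)]] by simp
      have "shM T (cmp T q1 j2) = shM T (zer T B' A')"
        using shM_cmp[OF j2(1) q1(1)] j2(2) q1(2) e(3) shM_zer[OF B'(1) A'(1)] A'(2) B'(2) by simp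
      then show "cmp T q1 j2 = zer T B' A'" using shM_inj[OF cmp_hom[OF j2(1) q1(1)] zer_hom[OF B'(1) A'(1)]] by simp
      have "shM T (cmp T q2 j1) = shM T (zer T A' B')"
        using shM_cmp[OF j1(1) q2(1)] j1(2) q2(2) e(4) shM_zer[OF A'(1) B'(1)] A'(2) B'(2) by simp
      then show "cmp T q2 j1 = zer T A' B'" using shM_inj[OF cmp_hom[OF j1(1) q2(1)] zer_hom[OF A'(1) B'(1)]] by simp
      have c1: "cmp T j1 q1 \<in> hom T X X" and c2: "cmp T j2 q2 \<in> hom T X X" using cmp_hom j1 j2 q1 q2 by auto
      have "shM T (add T (cmp T j1 q1) (cmp T j2 q2)) = shM T (idm T X)"
        using shM_add[OF c1 c2] shM_cmp[OF q1(1) j1(1)] shM_cmp[OF q2(1) j2(1)] j1(2) j2(2) q1(2) q2(2) e(5) shM_id[OF X] by simp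
      then show "add T (cmp T j1 q1) (cmp T j2 q2) = idm T X"
        using shM_inj[OF add_hom[OF c1 c2] id_hom[OF X]] by simp
    qed (use j1(1) j2(1) q1(1) q2(1) in auto)
    then have "zero_object T A' \<or> zero_object T B'" using ind unfolding indecomposable_def by blast
    then show ?thesis using zero_shift A' B' by blast
  qed
  then show ?thesis using SX nz' unfolding indecomposable_def by blast
qed

end
context TC
begin

lemma tparts: "(\<forall>X u Y v Z w. (X, u, Y, v, Z, w) \<in> dist T \<longrightarrow> triangle T X u Y v Z w)"
  "(\<forall>X \<in> Obj T. \<forall>Z. zero_object T Z \<longrightarrow>
        (X, idm T X, X, zer T X Z, Z, zer T Z (shO T X)) \<in> dist T)"
  "(\<forall>X Y u. u \<in> hom T X Y \<longrightarrow> (\<exists>v Z w. (X, u, Y, v, Z, w) \<in> dist T))"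
  "(\<forall>X u Y v Z w. (X, u, Y, v, Z, w) \<in> dist T \<longleftrightarrow>
        (Y, v, Z, w, shO T X, neg T (shM T u)) \<in> dist T)"
  "(\<forall>X u Y v Z w X' u' Y' v' Z' w' a b.
        (X, u, Y, v, Z, w) \<in> dist T \<longrightarrow> (X', u', Y', v', Z', w') \<in> dist T \<longrightarrow>
        a \<in> hom T X X' \<longrightarrow> b \<in> hom T Y Y' \<longrightarrow> cmp T b u = cmp T u' a \<longrightarrow>
        (\<exists>c \<in> hom T Z Z'. cmp T c v = cmp T v' b \<and> cmp T (shM T a) w = cmp T w' c))"
proof -
  note t = tri[unfolded triangulated_def]
  show "(\<forall>X u Y v Z w. (X, u, Y, v, Z, w) \<in> dist T \<longrightarrow> triangle T X u Y v Z w)"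
    by (rule conjunct1[OF conjunct2[OF conjunct2[OF t]]])
  show "(\<forall>X \<in> Obj T. \<forall>Z. zero_object T Z \<longrightarrow>
        (X, idm T X, X, zer T X Z, Z, zer T Z (shO T X)) \<in> dist T)"
    by (rule conjunct1[OF conjunct2[OF conjunct2[OF conjunct2[OF conjunct2[OF t]]]]])
  show "(\<forall>X Y u. u \<in> hom T X Y \<longrightarrow> (\<exists>v Z w. (X, u, Y, v, Z, w) \<in> dist T))"
    by (rule conjunct1[OF conjunct2[OF conjunct2[OF conjunct2[OF conjunct2[OF conjunct2[OF t]]]]]])
  show "(\<forall>X u Y v Z w. (X, u, Y, v, Z, w) \<in> dist T \<longleftrightarrow>
        (Y, v, Z, w, shO T X, neg T (shM T u)) \<in> dist T)"
    by (rule conjunct1[OF conjunct2[OF conjunct2[OF conjunct2[OF conjunct2[OF conjunct2[OF conjunct2[OF t]]]]]]])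
  show "(\<forall>X u Y v Z w X' u' Y' v' Z' w' a b.
        (X, u, Y, v, Z, w) \<in> dist T \<longrightarrow> (X', u', Y', v', Z', w') \<in> dist T \<longrightarrow>
        a \<in> hom T X X' \<longrightarrow> b \<in> hom T Y Y' \<longrightarrow> cmp T b u = cmp T u' a \<longrightarrow>
        (\<exists>c \<in> hom T Z Z'. cmp T c v = cmp T v' b \<and> cmp T (shM T a) w = cmp T w' c))"
    by (rule conjunct1[OF conjunct2[OF conjunct2[OF conjunct2[OF conjunct2[OF conjunct2[OF conjunct2[OF conjunct2[OF t]]]]]]]])
qed

lemma dist_tri: "(X, u, Y, v, Z, w) \<in> dist T \<Longrightarrow> u \<in> hom T X Y \<and> v \<in> hom T Y Z \<and> w \<in> hom T Z (shO T X)"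
  using tparts(1) unfolding triangle_def by blast
lemma rot: "(X, u, Y, v, Z, w) \<in> dist T \<longleftrightarrow> (Y, v, Z, w, shO T X, neg T (shM T u)) \<in> dist T"
  using tparts(4) by blast
lemma tr1: "X \<in> Obj T \<Longrightarrow> zero_object T Z \<Longrightarrow>
        (X, idm T X, X, zer T X Z, Z, zer T Z (shO T X)) \<in> dist T"
  using tparts(2) by blast
lemma tr_ext: "u \<in> hom T X Y \<Longrightarrow> \<exists>v Z w. (X, u, Y, v, Z, w) \<in> dist T"
  using tparts(3) by blast
lemma tr3: "(X, u, Y, v, Z, w) \<in> dist T \<Longrightarrow> (X', u', Y', v', Z', w') \<in> dist T \<Longrightarrow>
        a \<in> hom T X X' \<Longrightarrow> b \<in> hom T Y Y' \<Longrightarrow> cmp T b u = cmp T u' a \<Longrightarrow>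
        (\<exists>c \<in> hom T Z Z'. cmp T c v = cmp T v' b \<and> cmp T (shM T a) w = cmp T w' c)"
  using tparts(5) by blast

lemma T_zero_comp: assumes d: "(X, u, Y, v, Z, w) \<in> dist T" shows "cmp T v u = zer T X Z"
proof -
  obtain Z0 where z: "zero_object T Z0" using zo_ex by blast
  have hu: "u \<in> hom T X Y" and hv: "v \<in> hom T Y Z" using dist_tri d by auto
  have X: "X \<in> Obj T" using homO1 hu .
  have d0: "(X, idm T X, X, zer T X Z0, Z0, zer T Z0 (shO T X)) \<in> dist T" using tr1 X z by blast
  have "cmp T u (idm T X) = cmp T u (idm T X)" ..
  then obtain c where c: "c \<in> hom T Z0 Z" "cmp T c (zer T X Z0) = cmp T v u"
    using tr3[OF d0 d id_hom[OF X] hu] by (metis id_l id_r hu)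
  then show ?thesis using cmp_zer X by metis
qed

lemma T_fact: assumes d: "(X, u, Y, v, Z, w) \<in> dist T" and g: "g \<in> hom T W Y"
  and gv: "cmp T v g = zer T W Z"
  shows "\<exists>h\<in>hom T W X. g = cmp T u h"
proof -
  obtain Z0 where z: "zero_object T Z0" using zo_ex by blast
  have hu: "u \<in> hom T X Y" and hv: "v \<in> hom T Y Z" and hw: "w \<in> hom T Z (shO T X)" using dist_tri d by auto
  have W: "W \<in> Obj T" using homO1 g .
  have X: "X \<in> Obj T" using homO1 hu .
  have Z: "Z \<in> Obj T" using homO2 hv .
  have Z0: "Z0 \<in> Obj T" using zo_Obj z .
  have d0: "(W, zer T W Z0, Z0, zer T Z0 (shO T W), shO T W, neg T (shM T (idm T W))) \<in> dist T"
    using tr1[OF W z] rot by blast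
  have d1: "(Y, v, Z, w, shO T X, neg T (shM T u)) \<in> dist T" using d rot by blast
  have b: "zer T Z0 Z \<in> hom T Z0 Z" using zer_hom Z0 Z by blast
  have sq: "cmp T (zer T Z0 Z) (zer T W Z0) = cmp T v g"
    using gv zo_factor[OF z] zer_hom W Z0 b by metis
  obtain c where c: "c \<in> hom T (shO T W) (shO T X)"
    "cmp T (shM T g) (neg T (shM T (idm T W))) = cmp T (neg T (shM T u)) c"
    using tr3[OF d0 d1 g b sq] by blast
  have sg: "shM T g \<in> hom T (shO T W) (shO T Y)" using shM_hom g .
  have su: "shM T u \<in> hom T (shO T X) (shO T Y)" using shM_hom hu .
  have "neg T (shM T g) = neg T (cmp T (shM T u) c)"
    using c(2) shM_id[OF W] cmp_neg[OF id_hom[OF shO_Obj[OF W]] sg] id_r[OF sg] neg_cmp[OF c(1) su] by simp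
  then have e: "shM T g = cmp T (shM T u) c" using neg_inj sg cmp_hom c(1) su by metis
  obtain h where h: "h \<in> hom T W X" "c = shM T h" using shM_surj W X c(1) by blast
  have "shM T g = shM T (cmp T u h)" using e h shM_cmp hu by metis
  then have "g = cmp T u h" using shM_inj g cmp_hom h hu by metis
  then show ?thesis using h by blast
qed

lemma T_cofact: assumes d: "(X, u, Y, v, Z, w) \<in> dist T" and g: "g \<in> hom T Y W"
  and gu: "cmp T g u = zer T X W"
  shows "\<exists>c\<in>hom T Z W. g = cmp T c v"
proof -
  obtain Z0 where z: "zero_object T Z0" using zo_ex by blast
  have hu: "u \<in> hom T X Y" and hv: "v \<in> hom T Y Z" using dist_tri d by auto
  have W: "W \<in> Obj T" using homO2 g .
  have X: "X \<in> Obj T" using homO1 hu .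
  have Z0: "Z0 \<in> Obj T" using zo_Obj z .
  have z1: "zero_object T (shO T Z0)" using zero_shift Z0 z by blast
  have "(W, idm T W, W, zer T W (shO T Z0), shO T Z0, zer T (shO T Z0) (shO T W)) \<in> dist T"
    using tr1 W z1 by blast
  moreover have "neg T (shM T (zer T Z0 W)) = zer T (shO T Z0) (shO T W)"
    using shM_zer Z0 W neg_zer shO_Obj by metis
  ultimately have d0: "(Z0, zer T Z0 W, W, idm T W, W, zer T W (shO T Z0)) \<in> dist T"
    using rot by metis
  have a: "zer T X Z0 \<in> hom T X Z0" using zer_hom X Z0 by blast
  have sq: "cmp T g u = cmp T (zer T Z0 W) (zer T X Z0)" using gu zer_cmp a W by metis
  obtain c where "c \<in> hom T Z W" "cmp T c v = cmp T (idm T W) g"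
    using tr3[OF d d0 a g sq] by blast
  then show ?thesis using id_l g by metis
qed

lemma split_mono_iso:
  assumes m: "m \<in> hom T A B" and r: "r \<in> hom T B A" and rm: "cmp T r m = idm T A"
    and nzA: "\<not> zero_object T A" and indB: "indecomposable T B"
  shows "\<exists>r'\<in>hom T B A. cmp T r' m = idm T A \<and> cmp T m r' = idm T B"
proof -
  have A: "A \<in> Obj T" using homO1 m .
  have B: "B \<in> Obj T" using homO2 m .
  obtain q K h where d: "(A, m, B, q, K, h) \<in> dist T" using tr_ext m by blast
  have hq: "q \<in> hom T B K" and hh: "h \<in> hom T K (shO T A)" using dist_tri d by auto
  have K: "K \<in> Obj T" using homO2 hq .
  have d1: "(B, q, K, h, shO T A, neg T (shM T m)) \<in> dist T" using d rot by blast
  have sm: "shM T m \<in> hom T (shO T A) (shO T B)" using shM_hom m .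
  have sr: "shM T r \<in> hom T (shO T B) (shO T A)" using shM_hom r .
  have d2: "(K, h, shO T A, neg T (shM T m), shO T B, neg T (shM T q)) \<in> dist T" using d1 rot by blast
  have "cmp T (neg T (shM T m)) h = zer T K (shO T B)" using T_zero_comp d2 by blast
  then have "neg T (cmp T (shM T m) h) = zer T K (shO T B)" using neg_cmp hh sm by metis
  then have mh: "cmp T (shM T m) h = zer T K (shO T B)"
    using neg_neg neg_zer cmp_hom hh sm K shO_Obj B by metis
  have "h = cmp T (cmp T (shM T r) (shM T m)) h"
    using shM_cmp[OF m r] rm shM_id[OF A] id_l hh by metis
  also have "\<dots> = cmp T (shM T r) (cmp T (shM T m) h)" using assoc hh sm sr by metis
  also have "\<dots> = zer T K (shO T A)" using mh cmp_zer sr K by metis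
  finally have h0: "h = zer T K (shO T A)" .
  have "cmp T h (idm T K) = zer T K (shO T A)" using h0 id_r hh by metis
  then obtain t where t: "t \<in> hom T K B" "idm T K = cmp T q t" using T_fact[OF d1 id_hom[OF K]] by blast
  define d' where "d' = add T (idm T B) (neg T (cmp T t q))"
  have tq: "cmp T t q \<in> hom T B B" using cmp_hom t hq by blast
  have dh: "d' \<in> hom T B B" unfolding d'_def using add_hom neg_hom id_hom B tq by blast
  have qm: "cmp T q m = zer T A K" using T_zero_comp d by blast
  have "cmp T q d' = add T q (neg T (cmp T q (cmp T t q)))"
    unfolding d'_def using distr[OF id_hom[OF B] neg_hom[OF tq] hq] id_r hq cmp_neg tq by metis
  also have "cmp T q (cmp T t q) = q" using assoc t hq id_l by metis
  finally have "cmp T q d' = zer T B K" using add_neg hq by metis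
  then obtain r' where r': "r' \<in> hom T B A" "d' = cmp T m r'" using T_fact[OF d dh] by blast
  have dm: "cmp T d' m = m"
  proof -
    have "cmp T d' m = add T m (neg T (cmp T (cmp T t q) m))"
      unfolding d'_def using distl[OF m id_hom[OF B] neg_hom[OF tq]] id_l m neg_cmp tq by metis
    also have "cmp T (cmp T t q) m = zer T A B" using assoc m hq t qm cmp_zer A by metis
    finally show ?thesis using neg_zer add_0 m A B by metis
  qed
  have r'm: "cmp T r' m = idm T A"
  proof -
    have "cmp T r' m = cmp T (cmp T r m) (cmp T r' m)" using rm id_l cmp_hom m r' by metis
    also have "\<dots> = cmp T r (cmp T m (cmp T r' m))" using assoc cmp_hom m r r' by metis
    also have "cmp T m (cmp T r' m) = m" using dm r' assoc m by metis
    finally show ?thesis using rm by simp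
  qed
  have r't: "cmp T r' t = zer T K A"
  proof -
    have "cmp T d' t = add T t (neg T (cmp T (cmp T t q) t))"
      unfolding d'_def using distl[OF t(1) id_hom[OF B] neg_hom[OF tq]] id_l t neg_cmp tq by metis
    also have "cmp T (cmp T t q) t = t" using assoc t hq id_r by metis
    finally have dt: "cmp T d' t = zer T K B" using add_neg t by metis
    have "cmp T r' t = cmp T (cmp T r m) (cmp T r' t)" using rm id_l cmp_hom t r' by metis
    also have "\<dots> = cmp T r (cmp T m (cmp T r' t))" using assoc cmp_hom m r r' t by metis
    also have "cmp T m (cmp T r' t) = zer T K B" using dt r' assoc m t by metis
    finally show ?thesis using cmp_zer r K by metis
  qed
  have sum: "add T (cmp T m r') (cmp T t q) = idm T B"
  proof -
    have "add T (cmp T m r') (cmp T t q) = add T (idm T B) (add T (neg T (cmp T t q)) (cmp T t q))"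
      using r' d'_def add_assoc id_hom B neg_hom tq by metis
    also have "\<dots> = idm T B" using add_comm add_neg add_0 neg_hom tq id_hom B by metis
    finally show ?thesis .
  qed
  have "biproduct T A K B m t r' q" unfolding biproduct_def
    using m t r' hq r'm qm r't sum by auto
  then have "zero_object T K" using indB nzA unfolding indecomposable_def by blast
  then have "cmp T t q = zer T B B" using zo_factor hq t by blast
  then have "cmp T m r' = idm T B" using sum add_0 cmp_hom m r' by metis
  then show ?thesis using r' r'm by blast
qed

end
context TC
begin

lemma main:
  assumes indX: "indecomposable T X" and indY: "indecomposable T Y"
    and irr: "irreducible_mor T X Y u"
    and d: "(X, u, Y, v, C, w) \<in> dist T"
  shows "indecomposable T C"
proof -
  have hu: "u \<in> hom T X Y" and hv: "v \<in> hom T Y C" and hw: "w \<in> hom T C (shO T X)"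
    using dist_tri d by auto
  have X: "X \<in> Obj T" using homO1 hu .
  have Y: "Y \<in> Obj T" using homO2 hu .
  have C: "C \<in> Obj T" using homO2 hv .
  have nzX: "\<not> zero_object T X" using indX unfolding indecomposable_def by blast
  have nzY: "\<not> zero_object T Y" using indY unfolding indecomposable_def by blast
  have irrf: "\<And>Z g h. g \<in> hom T X Z \<Longrightarrow> h \<in> hom T Z Y \<Longrightarrow> u = cmp T h g \<Longrightarrow>
        split_mono T X Z g \<or> split_epi T Z Y h"
    using irr unfolding irreducible_mor_def by blast
  have unz: "u \<noteq> zer T X Y"
  proof
    assume u0: "u = zer T X Y"
    obtain Z0 where z: "zero_object T Z0" using zo_ex by blast
    have Z0: "Z0 \<in> Obj T" using zo_Obj z .
    have g: "zer T X Z0 \<in> hom T X Z0" and h: "zer T Z0 Y \<in> hom T Z0 Y" using zer_hom X Y Z0 by auto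
    have "u = cmp T (zer T Z0 Y) (zer T X Z0)" using u0 zo_factor[OF z g h] by simp
    then have "split_mono T X Z0 (zer T X Z0) \<or> split_epi T Z0 Y (zer T Z0 Y)" using irrf g h by blast
    then show False
    proof
      assume "split_mono T X Z0 (zer T X Z0)"
      then show False using zo_retract z g nzX unfolding split_mono_def by blast
    next
      assume "split_epi T Z0 Y (zer T Z0 Y)"
      then show False using zo_retract z h nzY unfolding split_epi_def by blast
    qed
  qed
  have nzC: "\<not> zero_object T C"
  proof
    assume z: "zero_object T C"
    have "cmp T v (idm T Y) = zer T Y C" using zo_to[OF z hv] id_r[OF hv] by simp
    then obtain h where "h \<in> hom T Y X" "idm T Y = cmp T u h" using T_fact[OF d id_hom[OF Y]] by blast
    then have "split_epi T X Y u" unfolding split_epi_def using hu by auto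
    then show False using irr unfolding irreducible_mor_def by blast
  qed
  have dr1: "(Y, v, C, w, shO T X, neg T (shM T u)) \<in> dist T" using d rot by blast
  have dr2: "(C, w, shO T X, neg T (shM T u), shO T Y, neg T (shM T v)) \<in> dist T" using dr1 rot by blast
  have su: "shM T u \<in> hom T (shO T X) (shO T Y)" using shM_hom hu .
  have SX: "shO T X \<in> Obj T" using shO_Obj X .
  have SY: "shO T Y \<in> Obj T" using shO_Obj Y .
  have uw: "cmp T (shM T u) w = zer T C (shO T Y)"
  proof -
    have "cmp T (neg T (shM T u)) w = zer T C (shO T Y)" using T_zero_comp dr2 by blast
    then have "neg T (cmp T (shM T u) w) = zer T C (shO T Y)" using neg_cmp[OF hw su] by simp
    then show ?thesis using neg_neg[OF cmp_hom[OF hw su]] neg_zer[OF C SY] by metis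
  qed
  have vu: "cmp T v u = zer T X C" using T_zero_comp d by blast
  have "zero_object T C1 \<or> zero_object T C2" if bp: "biproduct T C1 C2 C i1 i2 p1 p2" for C1 C2 i1 i2 p1 p2
  proof (rule ccontr)
    assume "\<not> (zero_object T C1 \<or> zero_object T C2)"
    then have nz1: "\<not> zero_object T C1" and nz2: "\<not> zero_object T C2" by auto
    from bp have i1: "i1 \<in> hom T C1 C" and i2: "i2 \<in> hom T C2 C" and p1: "p1 \<in> hom T C C1"
      and p2: "p2 \<in> hom T C C2" and e1: "cmp T p1 i1 = idm T C1" and e2: "cmp T p2 i2 = idm T C2"
      and e3: "cmp T p2 i1 = zer T C1 C2"
      unfolding biproduct_def by auto
    have C1: "C1 \<in> Obj T" using homO1 i1 .
    have C2: "C2 \<in> Obj T" using homO1 i2 .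
    define w1 where "w1 = cmp T w i1"
    have hw1: "w1 \<in> hom T C1 (shO T X)" unfolding w1_def using cmp_hom i1 hw by blast
    obtain a E b where dE: "(C1, w1, shO T X, a, E, b) \<in> dist T" using tr_ext hw1 by blast
    have ha: "a \<in> hom T (shO T X) E" and hb: "b \<in> hom T E (shO T C1)" using dist_tri dE by auto
    obtain Y1 where Y1: "Y1 \<in> Obj T" "E = shO T Y1" using shO_surj homO2 ha by blast
    obtain u1 where u1: "u1 \<in> hom T X Y1" "neg T a = shM T u1"
      using shM_surj[OF X Y1(1)] neg_hom[OF ha] Y1(2) by blast
    obtain v1 where v1: "v1 \<in> hom T Y1 C1" "neg T b = shM T v1"
      using shM_surj[OF Y1(1) C1] neg_hom[OF hb] Y1(2) by blast
    have "a = neg T (shM T u1)" using u1(2) neg_neg[OF ha] by metis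
    moreover have "b = neg T (shM T v1)" using v1(2) neg_neg[OF hb] by metis
    ultimately have D1: "(C1, w1, shO T X, neg T (shM T u1), shO T Y1, neg T (shM T v1)) \<in> dist T"
      using dE Y1 by simp
    have D1r: "(Y1, v1, C1, w1, shO T X, neg T (shM T u1)) \<in> dist T" using D1 rot by blast
    have su1: "shM T u1 \<in> hom T (shO T X) (shO T Y1)" using shM_hom u1(1) .
    have sv1: "shM T v1 \<in> hom T (shO T Y1) (shO T C1)" using shM_hom v1(1) .
    have sv: "shM T v \<in> hom T (shO T Y) (shO T C)" using shM_hom hv .
    have si1: "shM T i1 \<in> hom T (shO T C1) (shO T C)" using shM_hom i1 .
    have "cmp T (idm T (shO T X)) w1 = cmp T w i1" using id_l[OF hw1] w1_def by simp
    then obtain c where c: "c \<in> hom T (shO T Y1) (shO T Y)"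
      "cmp T c (neg T (shM T u1)) = cmp T (neg T (shM T u)) (idm T (shO T X))"
      "cmp T (shM T i1) (neg T (shM T v1)) = cmp T (neg T (shM T v)) c"
      using tr3[OF D1 dr2 i1 id_hom[OF SX]] by blast
    obtain f1 where f1: "f1 \<in> hom T Y1 Y" "c = shM T f1" using shM_surj Y1(1) Y c(1) by blast
    have "neg T (cmp T c (shM T u1)) = neg T (shM T u)"
      using c(2) cmp_neg[OF su1 c(1)] id_r[OF neg_hom[OF su]] by simp
    then have "cmp T c (shM T u1) = shM T u" using neg_inj[OF cmp_hom[OF su1 c(1)] su] by blast
    then have "shM T (cmp T f1 u1) = shM T u" using shM_cmp[OF u1(1) f1(1)] f1(2) by simp
    then have uf: "u = cmp T f1 u1" using shM_inj[OF cmp_hom[OF u1(1) f1(1)] hu] by simp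
    have "neg T (cmp T (shM T i1) (shM T v1)) = neg T (cmp T (shM T v) c)"
      using c(3) cmp_neg[OF sv1 si1] neg_cmp[OF c(1) sv] by simp
    then have "cmp T (shM T i1) (shM T v1) = cmp T (shM T v) c"
      using neg_inj[OF cmp_hom[OF sv1 si1] cmp_hom[OF c(1) sv]] by blast
    then have "shM T (cmp T i1 v1) = shM T (cmp T v f1)" using shM_cmp[OF v1(1) i1] shM_cmp[OF f1(1) hv] f1(2) by simp
    then have iv: "cmp T i1 v1 = cmp T v f1" using shM_inj[OF cmp_hom[OF v1(1) i1] cmp_hom[OF f1(1) hv]] by simp
    have "split_mono T X Y1 u1 \<or> split_epi T Y1 Y f1" using irrf u1(1) f1(1) uf by blast
    then show False
    proof
      assume "split_epi T Y1 Y f1"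
      then obtain s where s: "s \<in> hom T Y Y1" "cmp T f1 s = idm T Y" unfolding split_epi_def by blast
      have "cmp T p2 v = cmp T p2 (cmp T v (cmp T f1 s))" using s(2) id_r[OF hv] by simp
      also have "\<dots> = cmp T (cmp T (cmp T p2 i1) v1) s" using assoc[OF s(1) f1(1) hv] iv assoc[OF s(1) v1(1) i1] assoc[OF cmp_hom[OF s(1) v1(1)] i1 p2] assoc[OF s(1) v1(1) cmp_hom[OF i1 p2]] by simp
      also have "\<dots> = zer T Y C2" using e3 zer_cmp[OF v1(1) C2] zer_cmp[OF s(1) C2] by simp
      finally have "cmp T p2 v = zer T Y C2" .
      then obtain c' where c': "c' \<in> hom T (shO T X) C2" "p2 = cmp T c' w" using T_cofact[OF dr1 p2] by blast
      have m: "cmp T w i2 \<in> hom T C2 (shO T X)" using cmp_hom i2 hw by blast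
      have "cmp T c' (cmp T w i2) = idm T C2" using e2 c'(2) assoc[OF i2 hw c'(1)] by simp
      then obtain r'' where r'': "r'' \<in> hom T (shO T X) C2" "cmp T (cmp T w i2) r'' = idm T (shO T X)"
        using split_mono_iso[OF m c'(1) _ nz2 indec_shift[OF indX]] by blast
      have "shM T u = cmp T (shM T u) (cmp T (cmp T w i2) r'')" using r''(2) id_r[OF su] by simp
      also have "\<dots> = cmp T (cmp T (cmp T (shM T u) w) i2) r''" using assoc[OF r''(1) cmp_hom[OF i2 hw] su] assoc[OF i2 hw su] by simp
      also have "\<dots> = zer T (shO T X) (shO T Y)" using uw zer_cmp[OF i2 SY] zer_cmp[OF r''(1) SY] by simp
      finally have "shM T u = shM T (zer T X Y)" using shM_zer[OF X Y] by simp
      then have "u = zer T X Y" using shM_inj[OF hu zer_hom[OF X Y]] by simp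
      then show False using unz by blast
    next
      assume "split_mono T X Y1 u1"
      then obtain r where r: "r \<in> hom T Y1 X" "cmp T r u1 = idm T X" unfolding split_mono_def by blast
      have sr: "shM T r \<in> hom T (shO T Y1) (shO T X)" using shM_hom r(1) .
      have "cmp T (neg T (shM T u1)) w1 = zer T C1 (shO T Y1)" using T_zero_comp D1 by blast
      then have uw1: "cmp T (shM T u1) w1 = zer T C1 (shO T Y1)"
        using neg_cmp[OF hw1 su1] neg_neg[OF cmp_hom[OF hw1 su1]] neg_zer[OF C1 shO_Obj[OF Y1(1)]] by metis
      have "w1 = cmp T (cmp T (shM T r) (shM T u1)) w1"
        using shM_cmp[OF u1(1) r(1)] r(2) shM_id[OF X] id_l[OF hw1] by simp
      also have "\<dots> = cmp T (shM T r) (cmp T (shM T u1) w1)" using assoc[OF hw1 su1 sr] by simp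
      also have "\<dots> = zer T C1 (shO T X)" using uw1 cmp_zer[OF sr C1] by simp
      finally have "cmp T w i1 = zer T C1 (shO T X)" using w1_def by simp
      then obtain g' where g': "g' \<in> hom T C1 Y" "i1 = cmp T v g'" using T_fact[OF dr1 i1] by blast
      have pv: "cmp T p1 v \<in> hom T Y C1" using cmp_hom hv p1 by blast
      have "cmp T (cmp T p1 v) g' = idm T C1" using e1 g'(2) assoc[OF g'(1) hv p1] by simp
      then obtain r' where r': "r' \<in> hom T Y C1" "cmp T r' g' = idm T C1" "cmp T g' r' = idm T Y"
        using split_mono_iso[OF g'(1) pv _ nz1 indY] by blast
      have "cmp T p1 v = cmp T (cmp T p1 v) (cmp T g' r')" using r'(3) id_r[OF pv] by simp
      also have "\<dots> = r'" using assoc[OF r'(1) g'(1) pv] \<open>cmp T (cmp T p1 v) g' = idm T C1\<close> id_l[OF r'(1)] by simp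
      finally have pvr: "cmp T p1 v = r'" .
      have "u = cmp T (cmp T g' r') u" using r'(3) id_l[OF hu] by simp
      also have "\<dots> = cmp T g' (cmp T p1 (cmp T v u))" using assoc[OF hu r'(1) g'(1)] pvr[symmetric] assoc[OF hu hv p1] by simp
      also have "\<dots> = zer T X Y" using vu cmp_zer[OF p1 X] cmp_zer[OF g'(1) X] by simp
      finally show False using unz by blast
    qed
  qed
  then show ?thesis using C nzC unfolding indecomposable_def by blast
qed

end

theorem proposition6:
  fixes T :: "('o, 'm) tricat"
  assumes "triangulated T"
    and "indecomposable T X" and "indecomposable T Y"
    and "irreducible_mor T X Y u"
    and "(X, u, Y, v, C, w) \<in> dist T"
  shows "indecomposable T C"
proof -
  interpret TC T using assms(1) by unfold_locales
  show ?thesis using main assms(2-5) by blast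
qed

end
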